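(* Let $q \geq 2$ be an integer and let $n=(q^2+1)(q+1)$. Let $H_0$ be a graph on $n$ vertices in which each vertex may carry at most one loop, with symmetric $0/1$ adjacency matrix $M$ (where $M_{vv}=1$ exactly when $v$ carries a loop), such that every row of $M$ sums to $q+1$, and such that all eigenvalues of $M$ other than the largest one ($=q+1$) have absolute value at most $\sqrt{2q}$. Let $H$ be the simple graph obtained from $H_0$ by deleting all loops, and assume $H$ contains no cycle of length $3$ or $4$. Let $G_1$ be the simple graph on $V(H)$ in which two distinct vertices $x,y$ are adjacent if and only if there is a vertex $w \notin\{x,y\}$ adjacent in $H$ to both $x$ and $y$ (equivalently, $G_1$ is the union over $v \in V(H)$ of the complete graphs on $N_H(v)$). Then for every $X \subseteq V(G_1)$, \[\left|e_{G_1}(X) - \frac{q}{q^2+1}\binom{|X|}{2}\right| \leq (2q+1)|X|,\] i.e. $G_1$ is $\bigl(q/(q^2+1),\,2q+1\bigr)$-jumbled.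
   Context: For a graph $G$ and $X \subseteq V(G)$, $e_G(X)$ denotes the number of edges of $G$ with both endpoints in $X$. A graph $G$ is $(p,\beta)$-jumbled if $\left|e_G(X) - p\binom{|X|}{2}\right| \leq \beta |X|$ for all $X \subseteq V(G)$. $N_H(v)$ denotes the set of neighbours of $v$ in $H$. *)

theory Defs
  imports "Jordan_Normal_Form.Char_Poly" 
begin

text \<open>Graphs on vertex set {0..<n}, given by a symmetric adjacency predicate.\<close>

definition has_triangle :: "nat \<Rightarrow> (nat \<Rightarrow> nat \<Rightarrow> bool) \<Rightarrow> bool" where
  "has_triangle n E \<longleftrightarrow> (\<exists>a<n. \<exists>b<n. \<exists>c<n. distinct [a,b,c] \<and> E a b \<and> E b c \<and> E c a)"

definition has_C4 :: "nat \<Rightarrow> (nat \<Rightarrow> nat \<Rightarrow> bool) \<Rightarrow> bool" where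
  "has_C4 n E \<longleftrightarrow> (\<exists>a<n. \<exists>b<n. \<exists>c<n. \<exists>d<n. distinct [a,b,c,d] \<and> E a b \<and> E b c \<and> E c d \<and> E d a)"

definition edges_in :: "(nat \<Rightarrow> nat \<Rightarrow> bool) \<Rightarrow> nat set \<Rightarrow> nat" where
  "edges_in E X = card {{x, y} | x y. x \<in> X \<and> y \<in> X \<and> x \<noteq> y \<and> E x y}"

definition loopless_graph :: "real mat \<Rightarrow> nat \<Rightarrow> nat \<Rightarrow> bool" where
  "loopless_graph M x y \<longleftrightarrow> x \<noteq> y \<and> x < dim_row M \<and> y < dim_row M \<and> M $$ (x, y) = 1"

definition common_nbr_graph :: "nat \<Rightarrow> (nat \<Rightarrow> nat \<Rightarrow> bool) \<Rightarrow> nat \<Rightarrow> nat \<Rightarrow> bool" where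
  "common_nbr_graph n H x y \<longleftrightarrow> x \<noteq> y \<and> x < n \<and> y < n \<and>
     (\<exists>w<n. w \<noteq> x \<and> w \<noteq> y \<and> H w x \<and> H w y)"

end

theory Submission
  imports Defs "HOL-Analysis.Function_Topology"
begin


definition mv :: "real mat \<Rightarrow> nat \<Rightarrow> (nat \<Rightarrow> real) \<Rightarrow> nat \<Rightarrow> real" where
  "mv M n y i = (\<Sum>j<n. M $$ (i,j) * y j)"

lemma eig_root:
  assumes M: "M \<in> carrier_mat n n"
    and ev: "\<forall>i<n. mv M n v i = lam * v i" and nz: "ii < n" "v ii \<noteq> 0"
  shows "poly (char_poly M) lam = 0"
proof -
  have "eigenvector M (vec n v) lam"
    unfolding eigenvector_def
  proof (intro conjI)
    show "vec n v \<in> carrier_vec (dim_row M)" using M by auto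
    show "vec n v \<noteq> 0\<^sub>v (dim_row M)" using M nz
      by (metis carrier_matD(1) index_vec index_zero_vec(1))
    show "M *\<^sub>v vec n v = lam \<cdot>\<^sub>v vec n v"
    proof (rule eq_vecI)
      fix i assume i: "i < dim_vec (lam \<cdot>\<^sub>v vec n v)"
      hence i': "i < n" by simp
      have "(M *\<^sub>v vec n v) $ i = (\<Sum>j<n. M $$ (i,j) * v j)"
        using M i' by (simp add: scalar_prod_def atLeast0LessThan)
      also have "\<dots> = lam * v i" using ev i' unfolding mv_def by auto
      finally show "(M *\<^sub>v vec n v) $ i = (lam \<cdot>\<^sub>v vec n v) $ i" using i' by simp
    qed (use M in auto)
  qed
  hence "eigenvalue M lam" unfolding eigenvalue_def by blast
  thus ?thesis using eigenvalue_root_char_poly[OF M] by simp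
qed

lemma sum_insert_index:
  assumes i: "i < Suc m"
  shows "(\<Sum>k<m. f (insert_index i k)) = (\<Sum>j\<in>{..<Suc m} - {i}. f j)"
proof (rule sum.reindex_bij_betw)
  show "bij_betw (insert_index i) {..<m} ({..<Suc m} - {i})"
    by (rule bij_betw_byWitness[where f' = "delete_index i"])
       (use i in \<open>auto simp: insert_index_def delete_index_def\<close>)
qed

lemma mult_root:
  assumes M: "M \<in> carrier_mat n n"
    and rows: "\<forall>i<n. (\<Sum>j<n. M $$ (i,j)) = r"
    and cp: "char_poly M = [:-r,1:] * p"
    and w: "\<forall>i<n. mv M n w i = r * w i" and wsum: "(\<Sum>i<n. w i) = 0"
    and nz: "ii < n" "w ii \<noteq> 0"
  shows "poly p r = 0"
proof -
  obtain m where n: "n = Suc m" using nz by (cases n) auto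
  have del0: "poly (char_poly (mat_delete M i i)) r = 0" if i: "i < n" for i
  proof -
    define u where "u = (\<lambda>j. w i - w j)"
    have ui: "u i = 0" by (simp add: u_def)
    have uev: "\<forall>j<n. mv M n u j = r * u j"
    proof (intro allI impI)
      fix j assume j: "j < n"
      have "mv M n u j = w i * (\<Sum>k<n. M $$ (j,k)) - mv M n w j"
        unfolding mv_def u_def by (simp add: algebra_simps sum_distrib_left sum_subtractf)
      thus "mv M n u j = r * u j" using rows w j by (simp add: u_def algebra_simps)
    qed
    have "\<exists>j<n. u j \<noteq> 0"
    proof (rule ccontr)
      assume "\<not> ?thesis"
      hence "\<forall>j<n. w j = w i" by (auto simp: u_def)
      hence "(\<Sum>j<n. w j) = real n * w i" by simp
      hence "w i = 0" using wsum nz by simp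
      with \<open>\<forall>j<n. w j = w i\<close> nz show False by auto
    qed
    then obtain j where j: "j < n" "u j \<noteq> 0" by blast
    with ui have ji: "j \<noteq> i" by auto
    define u' where "u' = (\<lambda>k. u (insert_index i k))"
    have Md: "mat_delete M i i \<in> carrier_mat m m"
      using mat_delete_carrier[OF M, of i i] n by simp
    show ?thesis
    proof (rule eig_root[OF Md, where v = u' and ii = "delete_index i j"])
      show "delete_index i j < m" using j ji n i by (auto simp: delete_index_def)
      show "u' (delete_index i j) \<noteq> 0" using j ji by (simp add: u'_def insert_delete_index)
      show "\<forall>k<m. mv (mat_delete M i i) m u' k = r * u' k"
      proof (intro allI impI)
        fix k assume k: "k < m"
        have "mv (mat_delete M i i) m u' k = (\<Sum>l<m. M $$ (insert_index i k, insert_index i l) * u (insert_index i l))"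
          unfolding mv_def u'_def
          by (rule sum.cong[OF refl], subst mat_delete_index[symmetric, where n = m])
             (use M n i k in auto)
        also have "\<dots> = (\<Sum>l\<in>{..<n} - {i}. M $$ (insert_index i k, l) * u l)"
          using sum_insert_index[of i m "\<lambda>l. M $$ (insert_index i k, l) * u l"] i n by simp
        also have "\<dots> = (\<Sum>l<n. M $$ (insert_index i k, l) * u l)"
          by (rule sum.mono_neutral_left) (use ui in auto)
        also have "\<dots> = r * u' k" using uev k n unfolding mv_def u'_def
          by (simp add: insert_index_def)
        finally show "mv (mat_delete M i i) m u' k = r * u' k" .
      qed
    qed
  qed
  have "poly (pderiv (char_poly M)) r = 0"
    unfolding pderiv_char_poly[OF M] poly_sum using del0 by simp
  thus ?thesis unfolding cp pderiv_mult by (simp add: pderiv_pCons)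
qed



lemma mv_lin: "mv M n (\<lambda>j. a * u j + b * v j) i = a * mv M n u i + b * mv M n v i"
  unfolding mv_def by (simp add: algebra_simps sum.distrib sum_distrib_left)

lemma mv_cong: "(\<And>j. j < n \<Longrightarrow> u j = v j) \<Longrightarrow> mv M n u i = mv M n v i"
  unfolding mv_def by simp

lemma mv_sym:
  assumes sym: "\<forall>i<n. \<forall>j<n. M $$ (i, j) = M $$ (j, i)"
  shows "(\<Sum>i<n. mv M n u i * v i) = (\<Sum>i<n. u i * mv M n v i)"
proof -
  have "(\<Sum>i<n. mv M n u i * v i) = (\<Sum>i<n. \<Sum>j<n. M $$ (i,j) * u j * v i)"
    unfolding mv_def by (simp add: sum_distrib_right)
  also have "\<dots> = (\<Sum>j<n. \<Sum>i<n. M $$ (i,j) * u j * v i)" by (rule sum.swap)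
  also have "\<dots> = (\<Sum>j<n. u j * mv M n v j)"
    unfolding mv_def sum_distrib_left
    by (rule sum.cong[OF refl], rule sum.cong[OF refl]) (use sym in auto)
  finally show ?thesis .
qed

lemma mv_colsum:
  assumes sym: "\<forall>i<n. \<forall>j<n. M $$ (i, j) = M $$ (j, i)"
    and rows: "\<forall>i<n. (\<Sum>j<n. M $$ (i,j)) = r"
  shows "(\<Sum>i<n. mv M n u i) = r * (\<Sum>i<n. u i)"
proof -
  have "(\<Sum>i<n. mv M n u i) = (\<Sum>i<n. mv M n u i * 1)" by simp
  also have "\<dots> = (\<Sum>i<n. u i * mv M n (\<lambda>_. 1) i)" by (rule mv_sym[OF sym])
  also have "\<dots> = (\<Sum>i<n. u i * r)" unfolding mv_def using rows by simp
  finally show ?thesis by (simp add: sum_distrib_left mult.commute)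
qed

lemma lin_quad_le:
  fixes a b :: real
  assumes a: "a \<ge> 0" and h: "\<And>t. t > 0 \<Longrightarrow> a * t + b * t^2 \<le> 0"
  shows "a = 0"
proof (rule ccontr)
  assume "a \<noteq> 0" hence a0: "a > 0" using a by simp
  define t where "t = a / (\<bar>b\<bar> + 1)"
  have t0: "t > 0" using a0 by (simp add: t_def)
  have "-\<bar>b\<bar> \<le> b" by simp
  hence "(-\<bar>b\<bar>) * t^2 \<le> b * t^2" using mult_right_mono[of "-\<bar>b\<bar>" b "t^2"] by simp
  hence "b * t^2 \<ge> - \<bar>b\<bar> * t^2" by simp
  moreover have "\<bar>b\<bar> * t < a" unfolding t_def using a0
    by (simp add: field_simps)
  hence "\<bar>b\<bar> * t^2 < a * t" using t0 by (simp add: power2_eq_square)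
  ultimately have "a * t + b * t^2 > 0" by linarith
  with h[OF t0] show False by simp
qed

definition KK :: "nat \<Rightarrow> (nat \<Rightarrow> real) set" where
  "KK n = PiE UNIV (\<lambda>i::nat. if i < n then {-1..1::real} else {0}) \<inter>
     ({y. (\<Sum>i<n. y i) = 0} \<inter> {y. (\<Sum>i<n. (y i)^2) = 1})"

lemma KK_iff: "y \<in> KK n \<longleftrightarrow> (\<forall>i\<ge>n. y i = 0) \<and> (\<forall>i<n. y i \<in> {-1..1})
      \<and> (\<Sum>i<n. y i) = 0 \<and> (\<Sum>i<n. (y i)^2) = 1"
proof -
  have "y \<in> PiE UNIV (\<lambda>i::nat. if i < n then {-1..1::real} else {0}) \<longleftrightarrow>
        (\<forall>i. y i \<in> (if i < n then {-1..1::real} else {0}))"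
    unfolding PiE_UNIV_domain Pi_iff by simp
  also have "\<dots> \<longleftrightarrow> (\<forall>i\<ge>n. y i = 0) \<and> (\<forall>i<n. y i \<in> {-1..1})"
  proof
    assume h: "\<forall>i. y i \<in> (if i < n then {-1..1::real} else {0})"
    show "(\<forall>i\<ge>n. y i = 0) \<and> (\<forall>i<n. y i \<in> {-1..1})"
    proof (intro conjI allI impI)
      fix i assume "n \<le> i" thus "y i = 0" using h[rule_format, of i] by simp
    next
      fix i assume "i < n" thus "y i \<in> {-1..1}" using h[rule_format, of i] by simp
    qed
  next
    assume h: "(\<forall>i\<ge>n. y i = 0) \<and> (\<forall>i<n. y i \<in> {-1..1})"
    show "\<forall>i. y i \<in> (if i < n then {-1..1::real} else {0})"
    proof
      fix i show "y i \<in> (if i < n then {-1..1::real} else {0})"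
        using h by (cases "i < n") auto
    qed
  qed
  finally show ?thesis unfolding KK_def by blast
qed

lemma compact_KK: "compact (KK n)"
proof -
  define B where "B = (\<lambda>i::nat. if i < n then {-1..1::real} else {0})"
  have c1: "compact (PiE UNIV B)"
    unfolding compactin_euclidean_iff[symmetric] euclidean_product_topology[symmetric]
    by (subst compactin_PiE) (auto simp: B_def)
  have c2: "closed {y :: nat \<Rightarrow> real. (\<Sum>i<n. y i) = 0}"
    by (rule closed_Collect_eq) (intro continuous_intros continuous_on_product_coordinates)+
  have c3: "closed {y :: nat \<Rightarrow> real. (\<Sum>i<n. (y i)^2) = 1}"
    by (rule closed_Collect_eq) (intro continuous_intros continuous_on_product_coordinates)+
  show ?thesis unfolding KK_def B_def[symmetric] using c1 c2 c3 by blast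
qed

lemma cont_g: "continuous_on S (\<lambda>y::nat\<Rightarrow>real. \<Sum>i<n. (mv M n y i)^2)"
  unfolding mv_def
  by (intro continuous_intros continuous_on_subset[OF continuous_on_product_coordinates]; simp)



definition nrm :: "nat \<Rightarrow> (nat \<Rightarrow> real) \<Rightarrow> real" where
  "nrm n y = (\<Sum>i<n. (y i)^2)"

definition gg :: "real mat \<Rightarrow> nat \<Rightarrow> (nat \<Rightarrow> real) \<Rightarrow> real" where
  "gg M n y = (\<Sum>i<n. (mv M n y i)^2)"

lemma nrm_nonneg: "nrm n y \<ge> 0" unfolding nrm_def by (simp add: sum_nonneg)

lemma nrm_zero: "nrm n y = 0 \<Longrightarrow> i < n \<Longrightarrow> y i = 0"
  unfolding nrm_def by (subst (asm) sum_nonneg_eq_0_iff) auto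

lemma gg_zero: assumes "nrm n y = 0" shows "gg M n y = 0"
proof -
  have "mv M n y i = 0" for i unfolding mv_def using nrm_zero[OF assms] by simp
  thus ?thesis unfolding gg_def by simp
qed

lemma normalize_in_K:
  assumes s0: "(\<Sum>i<n. y i) = 0" and N: "nrm n y > 0"
  defines "z \<equiv> (\<lambda>i. if i < n then y i / sqrt (nrm n y) else 0)"
  shows "z \<in> KK n"
    and "gg M n z = gg M n y / nrm n y"
proof -
  let ?s = "sqrt (nrm n y)"
  have s: "?s > 0" using N by simp
  have ss: "?s^2 = nrm n y" using N by simp
  have "(\<Sum>i<n. z i) = (\<Sum>i<n. y i) / ?s" unfolding z_def by (simp add: sum_divide_distrib)
  hence 1: "(\<Sum>i<n. z i) = 0" using s0 by simp
  have "(\<Sum>i<n. (z i)^2) = (\<Sum>i<n. (y i)^2) / ?s^2" unfolding z_def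
    by (simp add: sum_divide_distrib power_divide)
  hence 2: "(\<Sum>i<n. (z i)^2) = 1" using ss N unfolding nrm_def by simp
  have 3: "z i \<in> {-1..1}" if i: "i < n" for i
  proof -
    have "(y i)^2 \<le> nrm n y" unfolding nrm_def
      by (rule member_le_sum[where f = "\<lambda>i. (y i)^2"]) (use i in auto)
    hence "(z i)^2 \<le> 1" using i s ss by (simp add: z_def power_divide)
    thus ?thesis using abs_le_square_iff[of "z i" 1] by (simp add: abs_le_iff)
  qed
  show "z \<in> KK n" unfolding KK_iff
    using 1 2 3 by (simp add: z_def)
  have "mv M n z i = mv M n y i / ?s" for i
    unfolding mv_def z_def by (simp add: sum_divide_distrib)
  hence "gg M n z = (\<Sum>i<n. (mv M n y i)^2) / ?s^2"
    unfolding gg_def by (simp add: sum_divide_distrib power_divide)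
  thus "gg M n z = gg M n y / nrm n y" using ss unfolding gg_def by simp
qed

lemma spectral:
  assumes M: "M \<in> carrier_mat n n"
    and sym: "\<forall>i<n. \<forall>j<n. M $$ (i, j) = M $$ (j, i)"
    and rows: "\<forall>i<n. (\<Sum>j<n. M $$ (i,j)) = r"
    and cp: "char_poly M = [:-r,1:] * p"
    and roots: "\<forall>t. poly p t = 0 \<longrightarrow> \<bar>t\<bar> \<le> s"
    and sr: "s < r"
    and y: "(\<Sum>i<n. y i) = 0"
  shows "gg M n y \<le> s^2 * nrm n y"
proof (cases "KK n = {}")
  case True
  have "nrm n y = 0"
  proof (rule ccontr)
    assume "nrm n y \<noteq> 0" hence "nrm n y > 0" using nrm_nonneg[of n y] by simp
    from normalize_in_K(1)[OF y this] True show False by blast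
  qed
  thus ?thesis using gg_zero by simp
next
  case False
  obtain y0 where y0: "y0 \<in> KK n" and mx: "\<forall>z\<in>KK n. gg M n z \<le> gg M n y0"
    using continuous_attains_sup[OF compact_KK False cont_g[where S="KK n" and n=n and M=M]]
    unfolding gg_def by blast
  define c where "c = gg M n y0"
  have c0: "c \<ge> 0" unfolding c_def gg_def by (simp add: sum_nonneg)
  have y0s: "(\<Sum>i<n. y0 i) = 0" and y0n: "nrm n y0 = 1"
    using y0 unfolding KK_iff nrm_def by auto
  have bnd: "gg M n u \<le> c * nrm n u" if u: "(\<Sum>i<n. u i) = 0" for u
  proof (cases "nrm n u = 0")
    case True thus ?thesis using gg_zero[OF True] by simp
  next
    case False
    hence N: "nrm n u > 0" using nrm_nonneg[of n u] by simp
    from normalize_in_K(1)[OF u N] normalize_in_K(2)[OF u N, where M=M] mx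
    have "gg M n u / nrm n u \<le> c" unfolding c_def by force
    thus ?thesis using N by (simp add: field_simps)
  qed
  define M2 where "M2 = (\<lambda>i. mv M n (mv M n y0) i)"
  define z where "z = (\<lambda>i. M2 i - c * y0 i)"
  have zs: "(\<Sum>i<n. z i) = 0"
  proof -
    have "(\<Sum>i<n. M2 i) = r * (r * (\<Sum>i<n. y0 i))"
      unfolding M2_def by (simp add: mv_colsum[OF sym rows])
    thus ?thesis unfolding z_def using y0s by (simp add: sum_subtractf sum_distrib_left[symmetric])
  qed
  have ip1: "(\<Sum>i<n. mv M n y0 i * mv M n z i) = (\<Sum>i<n. M2 i * z i)"
    unfolding M2_def by (rule mv_sym[OF sym, symmetric])
  have quad: "2 * nrm n z * t + (gg M n z - c * nrm n z) * t^2 \<le> 0" for t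
  proof -
    define u where "u = (\<lambda>i. 1 * y0 i + t * z i)"
    have us: "(\<Sum>i<n. u i) = 0" unfolding u_def using y0s zs
      by (simp add: sum.distrib sum_distrib_left[symmetric])
    have mu: "mv M n u i = mv M n y0 i + t * mv M n z i" for i
      unfolding u_def mv_lin by simp
    have g: "gg M n u = c + 2 * t * (\<Sum>i<n. M2 i * z i) + t^2 * gg M n z"
      unfolding gg_def mu c_def ip1[symmetric]
      by (simp add: power2_sum sum.distrib sum_distrib_left algebra_simps power_mult_distrib)
    have nu: "nrm n u = 1 + 2 * t * (\<Sum>i<n. y0 i * z i) + t^2 * nrm n z"
      using y0n unfolding nrm_def u_def
      by (simp add: power2_sum sum.distrib sum_distrib_left algebra_simps power_mult_distrib)
    have e: "(\<Sum>i<n. M2 i * z i) - c * (\<Sum>i<n. y0 i * z i) = nrm n z"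
      unfolding nrm_def z_def
      by (simp add: sum_distrib_left sum_subtractf[symmetric] power2_eq_square algebra_simps)
    have "gg M n u \<le> c * nrm n u" by (rule bnd[OF us])
    thus ?thesis unfolding g nu using e by (simp add: algebra_simps)
  qed
  have "2 * nrm n z = 0"
    by (rule lin_quad_le[of _ "gg M n z - c * nrm n z"]) (use nrm_nonneg quad in auto)
  hence z0: "\<And>i. i < n \<Longrightarrow> z i = 0" using nrm_zero by auto
  hence M2e: "\<And>i. i < n \<Longrightarrow> M2 i = c * y0 i" unfolding z_def by auto
  define t where "t = sqrt c"
  have tt: "t * t = c" "t \<ge> 0" unfolding t_def using c0 by auto
  obtain ii where ii: "ii < n" "y0 ii \<noteq> 0"
  proof -
    have "nrm n y0 \<noteq> 0" using y0n by simp
    then obtain i where "i < n" "y0 i \<noteq> 0" unfolding nrm_def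
      by (metis (no_types, lifting) lessThan_iff power_zero_numeral sum.neutral)
    thus ?thesis using that by blast
  qed
  obtain lam v jj where ev: "\<forall>i<n. mv M n v i = lam * v i" and vs: "(\<Sum>i<n. v i) = 0"
      and jj: "jj < n" "v jj \<noteq> 0" and lt: "\<bar>lam\<bar> = t"
  proof (cases "\<exists>i<n. mv M n y0 i + t * y0 i \<noteq> 0")
    case True
    then obtain jj where jj: "jj < n" "mv M n y0 jj + t * y0 jj \<noteq> 0" by blast
    define w where "w = (\<lambda>i. 1 * mv M n y0 i + t * y0 i)"
    have "\<forall>i<n. mv M n w i = t * w i"
    proof (intro allI impI)
      fix i assume i: "i < n"
      have "mv M n w i = M2 i + t * mv M n y0 i" unfolding w_def mv_lin M2_def by simp
      also have "\<dots> = t * w i" using M2e[OF i] tt unfolding w_def by (simp add: algebra_simps)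
      finally show "mv M n w i = t * w i" .
    qed
    moreover have "(\<Sum>i<n. w i) = 0" unfolding w_def
      using y0s by (simp add: sum.distrib mv_colsum[OF sym rows] sum_distrib_left[symmetric])
    ultimately show ?thesis using that[where lam=t and v=w and jj=jj] jj tt unfolding w_def by auto
  next
    case False
    hence "\<forall>i<n. mv M n y0 i = (-t) * y0 i" by auto
    thus ?thesis using that[where lam="-t" and v=y0 and jj=ii] ii y0s tt by auto
  qed
  have "poly (char_poly M) lam = 0" by (rule eig_root[OF M ev jj])
  hence "poly p lam = 0 \<or> lam = r" unfolding cp by simp
  moreover have "lam \<noteq> r"
  proof
    assume "lam = r"
    hence "poly p r = 0" using mult_root[OF M rows cp _ vs jj] ev by simp
    thus False using roots sr by force
  qed
  ultimately have "poly p lam = 0" by blast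
  hence "t \<le> s" using roots lt by auto
  hence "t^2 \<le> s^2" using tt(2) by (intro power_mono) auto
  hence "c \<le> s^2" using tt by (simp add: power2_eq_square)
  hence "c * nrm n y \<le> s^2 * nrm n y" by (rule mult_right_mono[OF _ nrm_nonneg])
  thus ?thesis using bnd[OF y] by linarith
qed

lemma real_choose2: "real (m choose 2) = real m * (real m - 1) / 2"
proof (induction m)
  case 0 thus ?case by simp
next
  case (Suc m)
  have "Suc m choose 2 = (m choose 1) + (m choose 2)"
    by (metis Suc_1 binomial_Suc_Suc)
  hence "real (Suc m choose 2) = real m + real (m choose 2)" by simp
  thus ?case using Suc by (simp add: field_simps)
qed

lemma edges_count:
  fixes H :: "nat \<Rightarrow> nat \<Rightarrow> bool"
  assumes Hsym: "\<And>x y. H x y \<Longrightarrow> H y x"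
    and Hirr: "\<And>x. \<not> H x x"
    and Hn: "\<And>x y. H x y \<Longrightarrow> x < n \<and> y < n"
    and noC4: "\<not> has_C4 n H"
    and X: "X \<subseteq> {..<n}"
  shows "edges_in (common_nbr_graph n H) X = (\<Sum>w<n. card {x\<in>X. H w x} choose 2)"
proof -
  define P where "P w = {S. S \<subseteq> {x\<in>X. H w x} \<and> card S = 2}" for w
  have fX: "finite X" using X finite_subset by blast
  have E: "{{x, y} | x y. x \<in> X \<and> y \<in> X \<and> x \<noteq> y \<and> common_nbr_graph n H x y} = (\<Union>w<n. P w)"
  proof (rule equalityI; rule subsetI)
    fix S assume "S \<in> {{x, y} | x y. x \<in> X \<and> y \<in> X \<and> x \<noteq> y \<and> common_nbr_graph n H x y}"
    then obtain x y w where S: "S = {x,y}" "x \<in> X" "y \<in> X" "x \<noteq> y" "w < n" "H w x" "H w y"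
      unfolding common_nbr_graph_def by blast
    hence "S \<in> P w" unfolding P_def by auto
    thus "S \<in> (\<Union>w<n. P w)" using S by blast
  next
    fix S assume "S \<in> (\<Union>w<n. P w)"
    then obtain w where w: "w < n" "S \<subseteq> {x\<in>X. H w x}" "card S = 2" unfolding P_def by blast
    then obtain x y where S: "S = {x,y}" "x \<noteq> y" by (auto simp: card_2_iff)
    have "x \<in> X" "y \<in> X" "H w x" "H w y" using w S by auto
    moreover have "w \<noteq> x" "w \<noteq> y" using \<open>H w x\<close> \<open>H w y\<close> Hirr by auto
    moreover have "x < n" "y < n" using X \<open>x \<in> X\<close> \<open>y \<in> X\<close> by auto
    ultimately show "S \<in> {{x, y} | x y. x \<in> X \<and> y \<in> X \<and> x \<noteq> y \<and> common_nbr_graph n H x y}"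
      unfolding common_nbr_graph_def using S w by blast
  qed
  have fin: "finite (P w)" for w
  proof -
    have "P w \<subseteq> Pow X" unfolding P_def by auto
    thus ?thesis using fX by (meson finite_Pow_iff finite_subset)
  qed
  have disj: "P w \<inter> P w' = {}" if "w < n" "w' < n" "w \<noteq> w'" for w w'
  proof (rule ccontr)
    assume "P w \<inter> P w' \<noteq> {}"
    then obtain S where S: "S \<in> P w" "S \<in> P w'" by blast
    then obtain x y where xy: "S = {x,y}" "x \<noteq> y" unfolding P_def by (auto simp: card_2_iff)
    have h: "H w x" "H w y" "H w' x" "H w' y" using S xy unfolding P_def by auto
    have "distinct [w,x,w',y]" using h Hirr that xy by auto
    moreover have "H w x \<and> H x w' \<and> H w' y \<and> H y w" using h Hsym by auto
    moreover have "w < n" "x < n" "w' < n" "y < n" using h Hn by auto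
    ultimately have "has_C4 n H" unfolding has_C4_def by blast
    thus False using noC4 by simp
  qed
  have "edges_in (common_nbr_graph n H) X = card (\<Union>w<n. P w)"
    unfolding edges_in_def E ..
  also have "\<dots> = (\<Sum>w<n. card (P w))"
    by (rule card_UN_disjoint) (use fin disj in auto)
  also have "\<dots> = (\<Sum>w<n. card {x\<in>X. H w x} choose 2)"
    unfolding P_def by (rule sum.cong[OF refl], rule n_subsets) (use fX in auto)
  finally show ?thesis .
qed

lemma abs_half: fixes T V R :: real
  shows "2 * T = V \<Longrightarrow> V \<le> 2 * R \<Longrightarrow> - 2 * R \<le> V \<Longrightarrow> \<bar>T\<bar> \<le> R" by linarith

lemma final_arith:
  fixes q k a G S L Q e :: real
  assumes q2: "q \<ge> 2" and Q: "Q = q^2 + 1" and k0: "0 \<le> k" and kn: "k \<le> Q * (q + 1)"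
    and a: "a * Q = k^2"
    and G: "0 \<le> G" "G \<le> 2 * q * k" and S: "0 \<le> S" "S \<le> (q+1) * L" and L: "0 \<le> L" "L \<le> k"
    and e: "2 * e = (q+1) * a + G - 2 * S - (q+1) * k + 2 * L"
  shows "\<bar>e - q / Q * (k * (k - 1) / 2)\<bar> \<le> (2 * q + 1) * k"
proof -
  have Qp: "Q > 0" using Q zero_le_power2[of q] by linarith
  have qQ: "q \<le> Q" using Q q2 by (simp add: power2_eq_square) (smt (verit) mult_le_cancel_right1)
  have aQ: "a = k^2 / Q" using a Qp by (simp add: field_simps)
  have a0: "a \<ge> 0" unfolding aQ using Qp by simp
  have "k * k \<le> (Q * (q+1)) * k" by (rule mult_right_mono[OF kn k0])
  hence "k^2 \<le> (q+1) * k * Q" by (simp add: power2_eq_square algebra_simps)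
  hence a1: "a \<le> (q+1) * k" unfolding aQ using Qp by (simp add: divide_le_eq)
  define b where "b = q * k / Q"
  have "q * k \<le> Q * k" by (rule mult_right_mono[OF qQ k0])
  hence b: "0 \<le> b" "b \<le> k" unfolding b_def using Qp k0 q2
    by (simp_all add: divide_le_eq mult.commute)
  have key: "2 * (e - q / Q * (k * (k - 1) / 2)) = a + b + G - 2 * S + 2 * L - (q+1) * k"
  proof -
    have "q / Q * (k * (k - 1)) = q * a - b" unfolding b_def using a Qp
      by (simp add: field_simps power2_eq_square)
    hence h2: "q / Q * (k * (k - 1) / 2) = (q * a - b) / 2" by simp
    show ?thesis unfolding h2 using e by (simp add: algebra_simps add_divide_distrib diff_divide_distrib)
  qed
  have qL: "q * L \<le> q * k" using L q2 by (simp add: mult_left_mono)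
  have hk: "2 * k \<le> q * k" using q2 k0 by (simp add: mult_right_mono)
  have up: "a + b + G - 2 * S + 2 * L - (q+1) * k \<le> 2 * ((2*q+1) * k)"
    using a1 b G S L q2 k0 hk by (simp add: algebra_simps)
  have lo: "a + b + G - 2 * S + 2 * L - (q+1) * k \<ge> - 2 * ((2*q+1) * k)"
  proof -
    define Lq where "Lq = L * q"
    have f1: "S \<le> L + Lq" using S(2) unfolding Lq_def by (simp add: algebra_simps)
    have f2: "Lq \<le> k * q" using qL unfolding Lq_def by (simp add: mult.commute)
    show ?thesis using a0 b G S(1) f1 f2 L q2 k0 hk by (simp add: algebra_simps)
  qed
  show ?thesis by (rule abs_half[OF key up lo])
qed

lemma sum_ind:
  fixes f :: "nat \<Rightarrow> real"
  assumes "X \<subseteq> {..<n}"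
  shows "(\<Sum>j<n. (if j \<in> X then f j else 0)) = (\<Sum>j\<in>X. f j)"
proof -
  have "(\<Sum>j<n. (if j \<in> X then f j else 0)) = sum f {j\<in>{..<n}. j \<in> X}"
    by (rule sum.inter_filter[symmetric]) simp
  also have "{j\<in>{..<n}. j \<in> X} = X" using assms by auto
  finally show ?thesis .
qed

lemma nc0_aux: fixes Q r k :: real assumes "Q > 0" "r \<noteq> 0"
  shows "Q * r * (k / (Q * r) * r)^2 = r * (k^2 / Q)"
  using assms by (simp add: power2_eq_square field_simps)

theorem mainTheorem3:
  fixes q n :: nat and M :: "real mat"
  assumes q2: "q \<ge> 2"
    and n_def: "n = (q^2 + 1) * (q + 1)"
    and dimM: "M \<in> carrier_mat n n"
    and zero_one: "\<forall>i<n. \<forall>j<n. M $$ (i, j) = 0 \<or> M $$ (i, j) = 1"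
    and symM: "\<forall>i<n. \<forall>j<n. M $$ (i, j) = M $$ (j, i)"
    and rows: "\<forall>i<n. (\<Sum>j<n. M $$ (i, j)) = real (q + 1)"
    and spec: "\<exists>p. char_poly M = [:- real (q + 1), 1:] * p \<and>
                 (\<forall>t::real. poly p t = 0 \<longrightarrow> \<bar>t\<bar> \<le> sqrt (2 * real q))"
    and noC3: "\<not> has_triangle n (loopless_graph M)"
    and noC4: "\<not> has_C4 n (loopless_graph M)"
  shows "\<forall>X \<subseteq> {0..<n}.
     \<bar>real (edges_in (common_nbr_graph n (loopless_graph M)) X)
        - real q / real (q^2 + 1) * real (card X choose 2)\<bar>
       \<le> real (2 * q + 1) * real (card X)"
proof (intro allI impI)
  fix X assume X: "X \<subseteq> {0..<n}"
  obtain p where cp: "char_poly M = [:- real (q + 1), 1:] * p"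
    and proots: "\<forall>t::real. poly p t = 0 \<longrightarrow> \<bar>t\<bar> \<le> sqrt (2 * real q)" using spec by blast
  define H where "H = loopless_graph M"
  have dimr: "dim_row M = n" using dimM by auto
  have Hiff: "H x y \<longleftrightarrow> x \<noteq> y \<and> x < n \<and> y < n \<and> M $$ (x, y) = 1" for x y
    unfolding H_def loopless_graph_def dimr by simp
  have Hsym: "H x y \<Longrightarrow> H y x" for x y unfolding Hiff using symM by auto
  have Hirr: "\<not> H x x" for x unfolding Hiff by simp
  have Hn: "H x y \<Longrightarrow> x < n \<and> y < n" for x y unfolding Hiff by simp
  have Xn: "X \<subseteq> {..<n}" using X by auto
  have fX: "finite X" using Xn finite_subset by blast
  have npos: "n > 0" unfolding n_def by simp
  have cardX: "card X \<le> n" using card_mono[OF _ Xn] by simp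
  have ecount: "edges_in (common_nbr_graph n H) X = (\<Sum>w<n. card {x\<in>X. H w x} choose 2)"
    by (rule edges_count[OF Hsym Hirr Hn]) (use noC4 H_def Xn in auto)
  define k where "k = real (card X)"
  define ind where "ind = (\<lambda>j. if j \<in> X then 1 else (0::real))"
  define D where "D = (\<lambda>w. mv M n ind w)"
  define l where "l = (\<lambda>w. if w \<in> X \<and> M $$ (w,w) = 1 then 1 else (0::real))"
  have Dsum: "D w = (\<Sum>x\<in>X. M $$ (w,x))" for w
  proof -
    have "D w = (\<Sum>j<n. (if j \<in> X then M $$ (w,j) else 0))"
      unfolding D_def mv_def ind_def by (rule sum.cong) auto
    thus ?thesis using sum_ind[OF Xn] by simp
  qed
  have sumind: "(\<Sum>j<n. ind j) = k"
    unfolding ind_def k_def using sum_ind[OF Xn, of "\<lambda>_. 1"] by simp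
  have dD: "real (card {x\<in>X. H w x}) = D w - l w" if w: "w < n" for w
  proof -
    have split: "(\<Sum>x\<in>X. M$$(w,x)) = (\<Sum>x\<in>X-{w}. M$$(w,x)) + (if w \<in> X then M$$(w,w) else 0)"
    proof (cases "w \<in> X")
      case True thus ?thesis using sum.remove[OF fX True, of "\<lambda>x. M$$(w,x)"] by simp
    next
      case False hence "X - {w} = X" by auto
      thus ?thesis using False by simp
    qed
    have "(\<Sum>x\<in>X-{w}. M$$(w,x)) = (\<Sum>x\<in>X-{w}. if M$$(w,x) = 1 then 1 else 0)"
    proof (rule sum.cong[OF refl])
      fix x assume "x \<in> X - {w}"
      hence "x < n" using Xn by auto
      thus "M$$(w,x) = (if M$$(w,x) = 1 then 1 else 0)" using zero_one w by auto
    qed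
    also have "\<dots> = (\<Sum>x\<in>{x\<in>X-{w}. M$$(w,x) = 1}. 1)"
      by (rule sum.inter_filter[symmetric]) (use fX in simp)
    also have "{x\<in>X-{w}. M$$(w,x) = 1} = {x\<in>X. H w x}"
      unfolding Hiff using Xn w by auto
    finally have a: "(\<Sum>x\<in>X-{w}. M$$(w,x)) = real (card {x\<in>X. H w x})" by simp
    have b: "(if w \<in> X then M$$(w,w) else 0) = l w"
      unfolding l_def using zero_one w by auto
    show ?thesis using Dsum[of w] split a b by simp
  qed
  have Dle: "0 \<le> D w \<and> D w \<le> real q + 1" if w: "w < n" for w
  proof -
    have nn: "\<forall>j<n. M$$(w,j) \<ge> 0" using zero_one w by force
    have "D w \<le> (\<Sum>j<n. M$$(w,j))" unfolding Dsum
      by (rule sum_mono2) (use Xn nn in auto)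
    moreover have "0 \<le> D w" unfolding Dsum by (rule sum_nonneg) (use Xn nn in auto)
    ultimately show ?thesis using rows w by simp
  qed
  have sumD: "(\<Sum>w<n. D w) = (real q + 1) * k"
    unfolding D_def mv_colsum[OF symM rows] sumind by simp
  define L where "L = (\<Sum>w<n. l w)"
  define S where "S = (\<Sum>w<n. D w * l w)"
  have L: "0 \<le> L" "L \<le> k"
  proof -
    show "0 \<le> L" unfolding L_def l_def by (rule sum_nonneg) simp
    have "L \<le> (\<Sum>w<n. ind w)" unfolding L_def by (rule sum_mono) (simp add: l_def ind_def)
    thus "L \<le> k" using sumind by simp
  qed
  have S: "0 \<le> S" "S \<le> (real q + 1) * L"
  proof -
    show "0 \<le> S" unfolding S_def by (rule sum_nonneg) (use Dle in \<open>simp add: l_def\<close>)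
    have "S \<le> (\<Sum>w<n. (real q + 1) * l w)" unfolding S_def
      by (rule sum_mono) (use Dle in \<open>auto simp: l_def\<close>)
    thus "S \<le> (real q + 1) * L" unfolding L_def by (simp add: sum_distrib_left)
  qed
  define e where "e = real (edges_in (common_nbr_graph n (loopless_graph M)) X)"
  have e2: "2 * e = (\<Sum>w<n. (D w)^2) - 2 * S - (real q + 1) * k + 2 * L"
  proof -
    have "2 * e = (\<Sum>w<n. 2 * real (card {x\<in>X. H w x} choose 2))"
      unfolding e_def H_def[symmetric] ecount by (simp add: sum_distrib_left)
    also have "\<dots> = (\<Sum>w<n. (D w)^2 - 2 * (D w * l w) - D w + 2 * l w)"
    proof (rule sum.cong[OF refl])
      fix w assume "w \<in> {..<n}"
      hence w: "w < n" by simp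
      have ll: "l w * l w = l w" by (simp add: l_def)
      show "2 * real (card {x\<in>X. H w x} choose 2) = (D w)^2 - 2 * (D w * l w) - D w + 2 * l w"
      proof -
        have "2 * real (card {x\<in>X. H w x} choose 2) = (D w - l w) * (D w - l w - 1)"
          unfolding real_choose2 dD[OF w] by simp
        also have "\<dots> = (D w)^2 - 2 * (D w * l w) - D w + l w * l w + l w"
          by (simp add: algebra_simps power2_eq_square)
        finally show ?thesis using ll by simp
      qed
    qed
    also have "\<dots> = (\<Sum>w<n. (D w)^2) - 2 * S - (\<Sum>w<n. D w) + 2 * L"
      unfolding S_def L_def by (simp add: sum.distrib sum_subtractf sum_distrib_left)
    finally show ?thesis using sumD by simp
  qed
  define y where "y = (\<lambda>j. ind j - k / real n)"
  have ysum: "(\<Sum>j<n. y j) = 0" unfolding y_def using sumind npos by (simp add: sum_subtractf)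
  define c0 where "c0 = k / real n * (real q + 1)"
  have mvind: "mv M n ind i = c0 + mv M n y i" if i: "i < n" for i
  proof -
    have "mv M n ind i = mv M n (\<lambda>j. (k / real n) * 1 + 1 * y j) i"
      by (rule mv_cong) (simp add: y_def)
    also have "\<dots> = (k / real n) * mv M n (\<lambda>_. 1) i + 1 * mv M n y i" by (rule mv_lin)
    also have "mv M n (\<lambda>_. 1) i = real q + 1" unfolding mv_def using rows i by simp
    finally show ?thesis unfolding c0_def by simp
  qed
  have sumD2: "(\<Sum>w<n. (D w)^2) = real n * c0^2 + gg M n y"
  proof -
    have "(\<Sum>w<n. (D w)^2) = (\<Sum>w<n. c0^2 + 2 * c0 * mv M n y w + (mv M n y w)^2)"
      by (rule sum.cong[OF refl]) (simp add: D_def mvind power2_sum)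
    also have "\<dots> = real n * c0^2 + 2 * c0 * (\<Sum>w<n. mv M n y w) + gg M n y"
      unfolding gg_def by (simp add: sum.distrib sum_distrib_left)
    also have "(\<Sum>w<n. mv M n y w) = 0" using mv_colsum[OF symM rows] ysum by simp
    finally show ?thesis by simp
  qed
  have sr: "sqrt (2 * real q) < real (q + 1)"
  proof -
    have "(real q + 1)^2 = (real q)^2 + 2 * real q + 1" by (simp add: power2_sum)
    hence "2 * real q < (real q + 1)^2" using zero_le_power2[of "real q"] by linarith
    hence "sqrt (2 * real q) < sqrt ((real q + 1)^2)" by (rule real_sqrt_less_mono)
    thus ?thesis by simp
  qed
  have Gle: "gg M n y \<le> (sqrt (2 * real q))^2 * nrm n y"
    by (rule spectral[OF dimM symM rows cp proots sr ysum])
  have nrmy: "nrm n y \<le> k"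
  proof -
    have "nrm n y = (\<Sum>j<n. ind j - 2 * (k / real n) * ind j + (k / real n)^2)"
      unfolding nrm_def y_def
      by (rule sum.cong[OF refl]) (simp add: ind_def power2_eq_square algebra_simps)
    also have "\<dots> = k - 2 * (k / real n) * k + real n * (k / real n)^2"
    proof -
      have s1: "(\<Sum>j<n. ind j - 2 * (k / real n) * ind j + (k / real n)^2)
          = (\<Sum>j<n. ind j) - (\<Sum>j<n. 2 * (k / real n) * ind j) + (\<Sum>j<n. (k / real n)^2)"
        by (simp only: sum.distrib sum_subtractf)
      have s2: "(\<Sum>j<n. 2 * (k / real n) * ind j) = 2 * (k / real n) * k"
        by (simp only: sum_distrib_left[symmetric] sumind)
      have s3: "(\<Sum>j<n. (k / real n)^2) = real n * (k / real n)^2" by simp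
      show ?thesis unfolding s1 s2 s3 sumind ..
    qed
    also have "\<dots> = k - k^2 / real n" using npos by (simp add: field_simps power2_eq_square)
    finally show ?thesis by simp
  qed
  have G: "0 \<le> gg M n y" "gg M n y \<le> 2 * real q * k"
  proof -
    show "0 \<le> gg M n y" unfolding gg_def by (simp add: sum_nonneg)
    have "(sqrt (2 * real q))^2 = 2 * real q" by simp
    hence "gg M n y \<le> 2 * real q * nrm n y" using Gle by simp
    also have "\<dots> \<le> 2 * real q * k" using nrmy by (simp add: mult_left_mono)
    finally show "gg M n y \<le> 2 * real q * k" .
  qed
  define Q where "Q = (real q)^2 + 1"
  define a where "a = k^2 / Q"
  have Qp: "Q > 0" unfolding Q_def using zero_le_power2[of "real q"] by linarith
  have aQ: "a * Q = k^2" unfolding a_def using Qp by simp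
  have nQ: "real n = Q * (real q + 1)" unfolding n_def Q_def by (simp add: algebra_simps)
  have nc0: "real n * c0^2 = (real q + 1) * a"
  proof -
    have q1: "real q + 1 \<noteq> 0" by simp
    show ?thesis unfolding c0_def a_def nQ using nc0_aux[OF Qp q1] .
  qed
  have e2': "2 * e = (real q + 1) * a + gg M n y - 2 * S - (real q + 1) * k + 2 * L"
    using e2 sumD2 nc0 by simp
  have kn: "k \<le> Q * (real q + 1)" unfolding k_def using cardX nQ by simp
  have fin: "\<bar>e - real q / Q * (k * (k - 1) / 2)\<bar> \<le> (2 * real q + 1) * k"
    by (rule final_arith[OF _ Q_def _ kn aQ G S L e2']) (use q2 k_def in auto)
  show "\<bar>real (edges_in (common_nbr_graph n (loopless_graph M)) X)
        - real q / real (q^2 + 1) * real (card X choose 2)\<bar>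
       \<le> real (2 * q + 1) * real (card X)"
    using fin unfolding e_def k_def Q_def real_choose2 by (simp add: add.commute)
qed

end
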